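(* Let $K>1$ and let $n_1,\dots,n_K$ be positive integers. Then \[ \mathbb{E}[\tau(n_1,\dots,n_K)] \;\le\; K\cdot \min_c n_c . \]
   Context: Initial stocks $\vec n^{(0)}=(n_1,\dots,n_K)$ of $K$ goodie types evolve as follows: at each step $t=1,2,\dots$, as long as at least two coordinates of $\vec n^{(t-1)}$ are nonzero, an index $i$ is chosen uniformly at random (independently of the past) among the indices with $n_i^{(t-1)}>0$, and $\vec n^{(t)}=\vec n^{(t-1)}-\vec e_i$ ($\vec e_i$ the $i$-th standard unit vector). The time of the first emptying event is $\tau(n_1,\dots,n_K)=\min\{t : \exists i \text{ with } n_i^{(t)}=0 \text{ and } n_i^{(0)}>0\}$. *)

theory Defs
  imports "HOL-Probability.Probability"
begin

text \<open>Stocks are a list n of length K (n!i = stock of type i).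
  tau_rem f n0 n is the distribution of the remaining time until the first
  emptying event (some i with n0!i > 0 and current stock 0), when the current
  stock vector is n and the initial vector is n0; f is fuel (the process makes at
  most sum_list n0 steps, so fuel sum_list n0 suffices).\<close>

fun tau_rem :: "nat \<Rightarrow> nat list \<Rightarrow> nat list \<Rightarrow> nat pmf" where
  "tau_rem 0 n0 n = return_pmf 0"
| "tau_rem (Suc f) n0 n =
     (if (\<exists>i<length n. 0 < n0 ! i \<and> n ! i = 0)
         \<or> card {i. i < length n \<and> 0 < n ! i} < 2
      then return_pmf 0
      else bind_pmf (pmf_of_set {i. i < length n \<and> 0 < n ! i})
             (\<lambda>i. map_pmf Suc (tau_rem f n0 (n[i := n ! i - 1]))))"

definition tau_pmf :: "nat list \<Rightarrow> nat pmf" where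
  "tau_pmf ns = tau_rem (sum_list ns) ns ns"

end

theory Submission
  imports Defs
begin

lemma tau_rem_fin: "set_pmf (tau_rem f n0 n) \<subseteq> {..f}"
proof (induction f arbitrary: n)
  case 0 then show ?case by simp
next
  case (Suc f)
  show ?case
  proof (cases "(\<exists>i<length n. 0 < n0 ! i \<and> n ! i = 0) \<or> card {i. i < length n \<and> 0 < n ! i} < 2")
    case True then show ?thesis by simp
  next
    case False
    have "set_pmf (tau_rem (Suc f) n0 n) = (\<Union>i\<in>set_pmf (pmf_of_set {i. i < length n \<and> 0 < n ! i}).
             Suc ` set_pmf (tau_rem f n0 (n[i := n ! i - 1])))"
      using False by (simp only: tau_rem.simps if_False set_bind_pmf set_map_pmf)
    also have "\<dots> \<subseteq> {..Suc f}"
    proof (rule UN_least)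
      fix i
      show "Suc ` set_pmf (tau_rem f n0 (n[i := n ! i - 1])) \<subseteq> {..Suc f}"
        using Suc.IH[of "n[i := n ! i - 1]"] by auto
    qed
    finally show ?thesis .
  qed
qed

lemma tau_rem_finite: "finite (set_pmf (tau_rem f n0 n))"
  by (rule finite_subset[OF tau_rem_fin]) simp

lemma exp_Suc: "measure_pmf.expectation (map_pmf Suc (tau_rem f n0 n)) real
   = 1 + measure_pmf.expectation (tau_rem f n0 n) real"
proof -
  have i: "integrable (measure_pmf (tau_rem f n0 n)) (\<lambda>x. real x)"
    by (rule integrable_measure_pmf_finite[OF tau_rem_finite])
  have "measure_pmf.expectation (map_pmf Suc (tau_rem f n0 n)) real
     = measure_pmf.expectation (tau_rem f n0 n) (\<lambda>x. 1 + real x)" by simp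
  also have "\<dots> = 1 + measure_pmf.expectation (tau_rem f n0 n) real"
    using i by (subst Bochner_Integration.integral_add) auto
  finally show ?thesis .
qed

lemma main:
  assumes pos: "\<forall>c\<in>set n0. c > 0" and len: "length n = length n0" and c: "c < length n0"
  shows "measure_pmf.expectation (tau_rem f n0 n) real \<le> real (length n0) * real (n ! c)"
  using len
proof (induction f arbitrary: n)
  case 0 then show ?case by simp
next
  case (Suc f)
  show ?case
  proof (cases "(\<exists>i<length n. 0 < n0 ! i \<and> n ! i = 0) \<or> card {i. i < length n \<and> 0 < n ! i} < 2")
    case True then show ?thesis by simp
  next
    case False
    let ?K = "length n0"
    have allpos: "\<And>i. i < length n \<Longrightarrow> 0 < n ! i"
      using False pos Suc.prems by (metis gr0I nth_mem)
    have S: "{i. i < length n \<and> 0 < n ! i} = {..<?K}" using allpos Suc.prems by auto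
    have K2: "?K \<ge> 2" using False S by simp
    have eq: "tau_rem (Suc f) n0 n = bind_pmf (pmf_of_set {i. i < length n \<and> 0 < n ! i})
             (\<lambda>i. map_pmf Suc (tau_rem f n0 (n[i := n ! i - 1])))"
      using False by (simp only: tau_rem.simps if_False)
    have "measure_pmf.expectation (tau_rem (Suc f) n0 n) real
       = (\<Sum>i<?K. measure_pmf.expectation (map_pmf Suc (tau_rem f n0 (n[i := n ! i - 1]))) real /\<^sub>R real ?K)"
      unfolding eq S
      by (subst pmf_expectation_bind_pmf_of_set) (use K2 tau_rem_finite in \<open>auto simp: lessThan_empty_iff\<close>)
    also have "\<dots> = (\<Sum>i<?K. measure_pmf.expectation (map_pmf Suc (tau_rem f n0 (n[i := n ! i - 1]))) real / real ?K)"
      by (simp add: divide_inverse mult.commute)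
    also have "\<dots> = (\<Sum>i<?K. (1 + measure_pmf.expectation (tau_rem f n0 (n[i := n ! i - 1])) real) / real ?K)"
      by (simp only: exp_Suc)
    also have "\<dots> \<le> (\<Sum>i<?K. (1 + real ?K * real ((n[i := n ! i - 1]) ! c)) / real ?K)"
    proof (rule sum_mono)
      fix i assume "i \<in> {..<?K}"
      have "measure_pmf.expectation (tau_rem f n0 (n[i := n ! i - 1])) real
            \<le> real ?K * real ((n[i := n ! i - 1]) ! c)"
        by (rule Suc.IH) (simp add: Suc.prems)
      then show "(1 + measure_pmf.expectation (tau_rem f n0 (n[i := n ! i - 1])) real) / real ?K
            \<le> (1 + real ?K * real ((n[i := n ! i - 1]) ! c)) / real ?K"
        by (intro divide_right_mono) auto
    qed
    also have "\<dots> = (\<Sum>i<?K. 1 / real ?K + real ((n[i := n ! i - 1]) ! c))"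
      using c by (intro sum.cong refl) (auto simp: add_divide_distrib)
    also have "\<dots> = real ?K * (1 / real ?K) + (\<Sum>i<?K. real ((n[i := n ! i - 1]) ! c))"
      by (simp add: sum.distrib)
    also have "\<dots> = 1 + (\<Sum>i<?K. real (n ! c) - (if i = c then 1 else 0))"
    proof -
      have "real ?K * (1 / real ?K) = 1" using c by auto
      moreover have "(\<Sum>i<?K. real ((n[i := n ! i - 1]) ! c)) = (\<Sum>i<?K. real (n ! c) - (if i = c then 1 else 0))"
      proof (intro sum.cong refl)
        fix i assume i: "i \<in> {..<?K}"
        have "0 < n ! c" using allpos Suc.prems c by simp
        then show "real ((n[i := n ! i - 1]) ! c) = real (n ! c) - (if i = c then 1 else 0)"
          using i Suc.prems c by (cases "i = c") (simp_all add: nth_list_update_neq of_nat_diff)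
      qed
      ultimately show ?thesis by simp
    qed
    also have "\<dots> = real ?K * real (n ! c)"
      using c by (simp add: sum_subtractf)
    finally show ?thesis .
  qed
qed

theorem lemma2:
  fixes ns :: "nat list"
  assumes "length ns > 1"
    and "\<forall>c\<in>set ns. c > 0"
  shows "measure_pmf.expectation (tau_pmf ns) real
           \<le> real (length ns) * real (Min (set ns))"
proof -
  have "Min (set ns) \<in> set ns" using assms(1) by (intro Min_in) auto
  then obtain c where c: "c < length ns" "ns ! c = Min (set ns)" by (metis in_set_conv_nth)
  show ?thesis unfolding tau_pmf_def using main[OF assms(2) refl c(1)] c(2) by simp
qed

end
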